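(* Let $\mathbb{K}$ be a totally ordered field which is Cantor complete but not algebraically saturated. Then (i) $\mathbb{K}$ has a strictly increasing unbounded sequence; (ii) $\mathbb{K}$ is sequentially complete.
   Context: Cantor complete: every countable family of closed bounded intervals in $\mathbb{K}$ with the finite intersection property has non-empty intersection. Algebraically saturated: every countable family of open intervals in $\mathbb{K}$ with the finite intersection property has non-empty intersection. Sequentially complete: every Cauchy sequence converges in the order topology, where $(a_n)$ is Cauchy if for every $\epsilon\in\mathbb{K}$, $\epsilon>0$, there is $N$ with $|a_n-a_m|<\epsilon$ for $n,m\ge N$. *)

theory Defs
  imports Main
begin

definition cantor_complete :: "'a::linordered_field itself \<Rightarrow> bool" where
  "cantor_complete _ \<longleftrightarrow>
     (\<forall>(a::nat \<Rightarrow> 'a) b.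
        (\<forall>F. finite F \<longrightarrow> (\<Inter>i\<in>F. {a i..b i}) \<noteq> {}) \<longrightarrow>
        (\<Inter>i. {a i..b i}) \<noteq> {})"

definition algebraically_saturated :: "'a::linordered_field itself \<Rightarrow> bool" where
  "algebraically_saturated _ \<longleftrightarrow>
     (\<forall>(a::nat \<Rightarrow> 'a) b.
        (\<forall>F. finite F \<longrightarrow> (\<Inter>i\<in>F. {a i<..<b i}) \<noteq> {}) \<longrightarrow>
        (\<Inter>i. {a i<..<b i}) \<noteq> {})"

definition ord_cauchy :: "(nat \<Rightarrow> 'a::linordered_field) \<Rightarrow> bool" where
  "ord_cauchy x \<longleftrightarrow>
     (\<forall>\<epsilon>>0. \<exists>N. \<forall>n\<ge>N. \<forall>m\<ge>N. \<bar>x n - x m\<bar> < \<epsilon>)"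

definition ord_converges_to :: "(nat \<Rightarrow> 'a::linordered_field) \<Rightarrow> 'a \<Rightarrow> bool" where
  "ord_converges_to x L \<longleftrightarrow> (\<forall>\<epsilon>>0. \<exists>N. \<forall>n\<ge>N. \<bar>x n - L\<bar> < \<epsilon>)"

definition sequentially_complete :: "'a::linordered_field itself \<Rightarrow> bool" where
  "sequentially_complete _ \<longleftrightarrow>
     (\<forall>x::nat \<Rightarrow> 'a. ord_cauchy x \<longrightarrow> (\<exists>L. ord_converges_to x L))"

end

theory Submission
  imports Defs
begin

lemma small_seq:
  assumes cc: "cantor_complete TYPE('a::linordered_field)"
    and nas: "\<not> algebraically_saturated TYPE('a)"
  shows "\<exists>d::nat \<Rightarrow> 'a. (\<forall>j. 0 < d j) \<and> (\<forall>\<epsilon>>0. \<exists>j. d j \<le> \<epsilon>)"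
proof -
  from nas obtain a b :: "nat \<Rightarrow> 'a" where
    fip: "\<forall>F. finite F \<longrightarrow> (\<Inter>i\<in>F. {a i<..<b i}) \<noteq> {}"
    and emp: "(\<Inter>i. {a i<..<b i}) = {}"
    unfolding algebraically_saturated_def by blast
  have ab: "a i < b j" for i j
  proof -
    from fip[rule_format, of "{i,j}"] have "(\<Inter>l\<in>{i,j}. {a l<..<b l}) \<noteq> {}" by simp
    then obtain x where "x \<in> (\<Inter>l\<in>{i,j}. {a l<..<b l})" by blast
    then have "a i < x" "x < b j" by auto
    then show ?thesis by simp
  qed
  have cfip: "\<forall>F. finite F \<longrightarrow> (\<Inter>i\<in>F. {a i..b i}) \<noteq> {}"
  proof (intro allI impI)
    fix F :: "nat set" assume "finite F"
    with fip obtain x where "x \<in> (\<Inter>i\<in>F. {a i<..<b i})" by blast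
    then have "x \<in> (\<Inter>i\<in>F. {a i..b i})" by auto
    then show "(\<Inter>i\<in>F. {a i..b i}) \<noteq> {}" by blast
  qed
  with cc obtain c where "c \<in> (\<Inter>i. {a i..b i})" unfolding cantor_complete_def by blast
  then have c: "\<forall>i. a i \<le> c \<and> c \<le> b i" by auto
  have "c \<notin> (\<Inter>i. {a i<..<b i})" using emp by blast
  then obtain k where "\<not> (a k < c \<and> c < b k)" by auto
  then have "c = a k \<or> c = b k" using c[rule_format, of k] by auto
  then show ?thesis
  proof
    assume ck: "c = a k"
    show ?thesis
    proof (intro exI[of _ "\<lambda>j. b j - c"] conjI allI impI)
      fix j show "0 < b j - c" using ab[of k j] ck by simp
    next
      fix \<epsilon>::'a assume e: "0<\<epsilon>"
      show "\<exists>j. b j - c \<le> \<epsilon>"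
      proof (rule ccontr)
        assume "\<not> ?thesis" then have "\<forall>j. c + \<epsilon> < b j" by (auto simp: not_le algebra_simps)
        then have "c+\<epsilon> \<in> (\<Inter>i. {a i<..<b i})" using c e
          by (auto intro: order.strict_trans1[of _ c])
        with emp show False by blast
      qed
    qed
  next
    assume ck: "c = b k"
    show ?thesis
    proof (intro exI[of _ "\<lambda>j. c - a j"] conjI allI impI)
      fix j show "0 < c - a j" using ab[of j k] ck by simp
    next
      fix \<epsilon>::'a assume e: "0<\<epsilon>"
      show "\<exists>j. c - a j \<le> \<epsilon>"
      proof (rule ccontr)
        assume "\<not> ?thesis" then have "\<forall>j. a j < c - \<epsilon>" by (auto simp: not_le algebra_simps)
        then have "c-\<epsilon> \<in> (\<Inter>i. {a i<..<b i})" using c e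
          by (auto intro: order.strict_trans2[of _ c])
        with emp show False by blast
      qed
    qed
  qed
qed

theorem mainTheorem18:
  assumes "cantor_complete TYPE('a::linordered_field)"
    and "\<not> algebraically_saturated TYPE('a)"
  shows "(\<exists>x::nat \<Rightarrow> 'a. strict_mono x \<and> (\<forall>M. \<exists>n. M < x n))
         \<and> sequentially_complete TYPE('a)"
proof -
  obtain d :: "nat \<Rightarrow> 'a" where dpos: "\<forall>j. 0 < d j" and dsm: "\<forall>\<epsilon>>0. \<exists>j. d j \<le> \<epsilon>"
    using small_seq[OF assms] by blast
  define y where "y j = 1 / d j" for j
  have yunb: "\<exists>j. M < y j" for M
  proof -
    have ep: "0 < 1 / (\<bar>M\<bar> + 1)" by (simp add: add_pos_nonneg)
    then obtain j where dj: "d j \<le> 1 / (\<bar>M\<bar> + 1)" using dsm by blast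
    have "1 / (1 / (\<bar>M\<bar> + 1)) \<le> 1 / d j"
      using dj dpos ep by (intro divide_left_mono) (auto intro: mult_pos_pos)
    then have "\<bar>M\<bar> + 1 \<le> y j" by (simp add: y_def)
    then show ?thesis by (intro exI[of _ j]) linarith
  qed
  define x where "x = rec_nat (max 1 (y 0)) (\<lambda>n xn. max (xn+1) (y (Suc n)))"
  have x0: "x 0 = max 1 (y 0)" and xS: "x (Suc n) = max (x n + 1) (y (Suc n))" for n
    by (simp_all add: x_def)
  have xsm: "strict_mono x"
    by (rule strict_mono_Suc_iff[THEN iffD2]) (auto simp: xS)
  have xy: "y n \<le> x n \<and> 1 \<le> x n" for n
    by (induction n) (auto simp: x0 xS)
  have xunb: "\<forall>M. \<exists>n. M < x n"
  proof
    fix M obtain j where "M < y j" using yunb by blast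
    then show "\<exists>n. M < x n" using xy[of j] by (intro exI[of _ j]) simp
  qed
  define e where "e n = 1 / x n" for n
  have epos: "0 < e n" for n using xy[of n] by (simp add: e_def)
  have esm: "\<exists>n. e n < \<epsilon>" if "0 < \<epsilon>" for \<epsilon>
  proof -
    obtain n where "1/\<epsilon> < x n" using xunb by blast
    then have "1 / x n < \<epsilon>" using that xy[of n]
      by (metis divide_less_eq mult.commute order_less_le_trans zero_less_one)
    then show ?thesis by (auto simp: e_def)
  qed
  have sc: "sequentially_complete TYPE('a)"
    unfolding sequentially_complete_def
  proof (intro allI impI)
    fix s :: "nat \<Rightarrow> 'a" assume "ord_cauchy s"
    then have "\<forall>n. \<exists>N. \<forall>p\<ge>N. \<forall>q\<ge>N. \<bar>s p - s q\<bar> < e n"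
      unfolding ord_cauchy_def using epos by blast
    then obtain N where N: "\<And>n p q. p \<ge> N n \<Longrightarrow> q \<ge> N n \<Longrightarrow> \<bar>s p - s q\<bar> < e n"
      by metis
    define lo where "lo n = s (N n) - e n" for n
    define hi where "hi n = s (N n) + e n" for n
    have fp: "\<forall>F. finite F \<longrightarrow> (\<Inter>i\<in>F. {lo i..hi i}) \<noteq> {}"
    proof (intro allI impI)
      fix F :: "nat set" assume fin: "finite F"
      show "(\<Inter>i\<in>F. {lo i..hi i}) \<noteq> {}"
      proof (cases "F = {}")
        case True then show ?thesis by simp
      next
        case False
        define M where "M = Max (N ` F)"
        have "s M \<in> {lo i..hi i}" if "i \<in> F" for i
        proof -
          have "M \<ge> N i" using fin that by (simp add: M_def)
          then have "\<bar>s M - s (N i)\<bar> < e i" using N by blast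
          then show ?thesis by (auto simp: lo_def hi_def abs_less_iff)
        qed
        then show ?thesis by blast
      qed
    qed
    with assms(1) obtain L where "L \<in> (\<Inter>i. {lo i..hi i})" unfolding cantor_complete_def by blast
    then have L: "\<And>i. lo i \<le> L \<and> L \<le> hi i" by auto
    show "\<exists>L. ord_converges_to s L"
      unfolding ord_converges_to_def
    proof (intro exI[of _ L] allI impI)
      fix \<epsilon> :: 'a assume "0 < \<epsilon>"
      then obtain n where en: "e n < \<epsilon>/2" using esm[of "\<epsilon>/2"] by auto
      show "\<exists>M. \<forall>p\<ge>M. \<bar>s p - L\<bar> < \<epsilon>"
      proof (intro exI[of _ "N n"] allI impI)
        fix p assume "p \<ge> N n"
        then have "\<bar>s p - s (N n)\<bar> < e n" using N by blast
        moreover have "lo n \<le> L" "L \<le> hi n" using L by auto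
        ultimately show "\<bar>s p - L\<bar> < \<epsilon>" using en
          by (auto simp: lo_def hi_def abs_less_iff)
      qed
    qed
  qed
  show ?thesis using xsm xunb sc by blast
qed

end
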